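(* Let $n\ge 2$, $t\ge 3$, and let $L$ be an $\mathbb{F}_q$-linear set of pseudoregulus type of $\Lambda=PG(2n-1,q^t)$. Then the pseudoregulus associated with $L$ is exactly the set of all lines of $\Lambda$ having weight $t$ in $L$. In particular, the pseudoregulus associated with $L$ and its two transversal spaces are uniquely determined by $L$.
   Context: Let $V$ be a vector space over $\mathbb{F}_{q^t}$ ($q$ a prime power), $\langle \mathbf u\rangle_{q^t}$ the projective point defined by $\mathbf u\ne\mathbf 0$. For an $\mathbb{F}_q$-subspace $U$ of $V$, $L_U=\{\langle \mathbf u\rangle_{q^t}:\mathbf u\in U\setminus\{\mathbf 0\}\}$ is the $\mathbb{F}_q$-linear set defined by $U$, of rank $\dim_{\mathbb{F}_q}U$; the weight of a subspace $PG(W,\mathbb{F}_{q^t})$ in $L_U$ is $\dim_{\mathbb{F}_q}(W\cap U)$; $L_U$ is scattered if every point has weight 1. Definition (pseudoregulus type): for integers $t,n\ge 2$, a scattered $\mathbb{F}_q$-linear set $L=L_U$ of $\Lambda=PG(V,\mathbb{F}_{q^t})=PG(2n-1,q^t)$ of rank $tn$ is of pseudoregulus type if (i) there exist $m=(q^{nt}-1)/(q^t-1)$ pairwise disjoint lines $s_1,\dots,s_m$ of $\Lambda$ each having weight $t$ in $L$ (i.e. $|L\cap s_i|=(q^t-1)/(q-1)$), and (ii) there exist exactly two $(n-1)$-dimensional subspaces $T_1,T_2$ of $\Lambda$ disjoint from $L$ such that $T_j\cap s_i\neq\emptyset$ for all $i=1,\dots,m$, $j=1,2$. The set $\{s_1,\dots,s_m\}$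 is called the pseudoregulus associated with $L$, and $T_1,T_2$ its transversal spaces. *)

theory Defs
  imports Main
begin

text \<open>Ambient field F_{q^t} is a finite field type 'a; F_q is a subfield K of it.
  The vector space V = F_{q^t}^{2n} is represented as functions 'm \<Rightarrow> 'a with CARD('m) = 2n.\<close>

definition vzero :: "'m \<Rightarrow> 'a::field" where "vzero = (\<lambda>i. 0)"
definition vadd :: "('m \<Rightarrow> 'a::field) \<Rightarrow> ('m \<Rightarrow> 'a) \<Rightarrow> ('m \<Rightarrow> 'a)" where
  "vadd u v = (\<lambda>i. u i + v i)"
definition smul :: "'a::field \<Rightarrow> ('m \<Rightarrow> 'a) \<Rightarrow> ('m \<Rightarrow> 'a)" where
  "smul c v = (\<lambda>i. c * v i)"

definition subfield :: "'a::field set \<Rightarrow> bool" where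
  "subfield K \<longleftrightarrow> 0 \<in> K \<and> 1 \<in> K \<and> (\<forall>a\<in>K. \<forall>b\<in>K. a + b \<in> K \<and> a * b \<in> K)
     \<and> (\<forall>a\<in>K. - a \<in> K) \<and> (\<forall>a\<in>K. a \<noteq> 0 \<longrightarrow> inverse a \<in> K)"

text \<open>K-subspace of V (for K = UNIV: an F_{q^t}-subspace).\<close>
definition Ksubspace :: "'a::field set \<Rightarrow> ('m \<Rightarrow> 'a) set \<Rightarrow> bool" where
  "Ksubspace K W \<longleftrightarrow> vzero \<in> W \<and> (\<forall>u\<in>W. \<forall>v\<in>W. vadd u v \<in> W)
     \<and> (\<forall>c\<in>K. \<forall>v\<in>W. smul c v \<in> W)"

definition Kdim :: "'a::field set \<Rightarrow> ('m \<Rightarrow> 'a) set \<Rightarrow> nat" where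
  "Kdim K W = (THE d. card W = card K ^ d)"

definition pt :: "('m \<Rightarrow> 'a::field) \<Rightarrow> ('m \<Rightarrow> 'a) set" where
  "pt u = {smul c u | c. True}"

definition linset :: "('m \<Rightarrow> 'a::field) set \<Rightarrow> ('m \<Rightarrow> 'a) set set" where
  "linset U = {pt u | u. u \<in> U \<and> u \<noteq> vzero}"

definition proj_subspace :: "nat \<Rightarrow> ('m \<Rightarrow> 'a::{field,finite}) set \<Rightarrow> bool" where
  "proj_subspace k W \<longleftrightarrow> Ksubspace UNIV W \<and> Kdim UNIV W = k + 1"

definition is_line :: "('m \<Rightarrow> 'a::{field,finite}) set \<Rightarrow> bool" where
  "is_line s \<longleftrightarrow> proj_subspace 1 s"

definition weight :: "'a::field set \<Rightarrow> ('m \<Rightarrow> 'a) set \<Rightarrow> ('m \<Rightarrow> 'a) set \<Rightarrow> nat" where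
  "weight K U W = Kdim K (W \<inter> U)"

definition scattered :: "'a::field set \<Rightarrow> ('m \<Rightarrow> 'a) set \<Rightarrow> bool" where
  "scattered K U \<longleftrightarrow> (\<forall>P\<in>linset U. weight K U P = 1)"

definition proj_meet :: "('m \<Rightarrow> 'a::field) set \<Rightarrow> ('m \<Rightarrow> 'a) set \<Rightarrow> bool" where
  "proj_meet A B \<longleftrightarrow> (\<exists>u. u \<noteq> vzero \<and> u \<in> A \<and> u \<in> B)"

definition transversals ::
  "nat \<Rightarrow> ('m \<Rightarrow> 'a::{field,finite}) set \<Rightarrow> ('m \<Rightarrow> 'a) set set \<Rightarrow> ('m \<Rightarrow> 'a) set set" where
  "transversals n U S = {T. proj_subspace (n - 1) T \<and> (\<forall>P\<in>linset U. \<not> P \<subseteq> T)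
      \<and> (\<forall>s\<in>S. proj_meet T s)}"

text \<open>U defines a scattered linear set L_U of rank tn of PG(2n-1,q^t) of pseudoregulus type,
  with associated pseudoregulus S (its transversal spaces are then transversals n U S).\<close>
definition pseudoregulus_type ::
  "'a::{field,finite} set \<Rightarrow> nat \<Rightarrow> nat \<Rightarrow> ('m \<Rightarrow> 'a) set \<Rightarrow> ('m \<Rightarrow> 'a) set set \<Rightarrow> bool" where
  "pseudoregulus_type K n t U S \<longleftrightarrow>
     Ksubspace K U \<and> scattered K U \<and> Kdim K U = t * n
     \<and> (\<forall>s\<in>S. is_line s \<and> weight K U s = t)
     \<and> card S = (card K ^ (n * t) - 1) div (card K ^ t - 1)
     \<and> (\<forall>s1\<in>S. \<forall>s2\<in>S. s1 \<noteq> s2 \<longrightarrow> \<not> proj_meet s1 s2)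
     \<and> card (transversals n U S) = 2"

end

theory Submission
  imports Defs "HOL-Library.Function_Algebras" "HOL-Library.Cardinality"
begin

lemma vzero_eq: "vzero = 0" by (simp add: vzero_def fun_eq_iff)
lemma vadd_eq: "vadd u v = u + v" by (simp add: vadd_def fun_eq_iff)

lemma smul_add: "smul c (u + v) = smul c u + smul c v"
  by (simp add: smul_def fun_eq_iff algebra_simps)
lemma smul_add2: "smul (c + d) u = smul c u + smul d u"
  by (simp add: smul_def fun_eq_iff algebra_simps)
lemma smul_diff: "smul c (u - v) = smul c u - smul c v"
  by (simp add: smul_def fun_eq_iff algebra_simps)
lemma smul_diff2: "smul (c - d) u = smul c u - smul d u"
  by (simp add: smul_def fun_eq_iff algebra_simps)
lemma smul_smul: "smul c (smul d u) = smul (c * d) u"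
  by (simp add: smul_def fun_eq_iff algebra_simps)
lemma smul_one[simp]: "smul 1 u = u" by (simp add: smul_def)
lemma smul_zero1[simp]: "smul 0 u = 0" by (simp add: smul_def fun_eq_iff)
lemma smul_zero2[simp]: "smul c 0 = 0" by (simp add: smul_def fun_eq_iff)
lemma smul_neg: "smul (- c) u = - smul c u" by (simp add: smul_def fun_eq_iff)
lemma smul_eq_0: "smul c (u::'m \<Rightarrow> 'a::field) = 0 \<longleftrightarrow> c = 0 \<or> u = 0"
  by (auto simp: smul_def fun_eq_iff)
lemma smul_cancel: "(u::'m \<Rightarrow> 'a::field) \<noteq> 0 \<Longrightarrow> smul a u = smul b u \<longleftrightarrow> a = b"
proof
  assume "u \<noteq> 0" "smul a u = smul b u"
  then have "smul (a - b) u = 0" by (simp add: smul_diff2)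
  with \<open>u \<noteq> 0\<close> show "a = b" by (simp add: smul_eq_0)
qed simp
lemma smul_inv: "c \<noteq> 0 \<Longrightarrow> smul (inverse c) (smul c u) = (u::'m \<Rightarrow> 'a::field)"
  by (simp add: smul_smul)

lemma Ksubspace_iff: "Ksubspace K W \<longleftrightarrow> 0 \<in> W \<and> (\<forall>u\<in>W. \<forall>v\<in>W. u + v \<in> W)
     \<and> (\<forall>c\<in>K. \<forall>v\<in>W. smul c v \<in> W)"
  by (simp add: Ksubspace_def vzero_eq vadd_eq)

lemma subfield_UNIV: "subfield UNIV" by (simp add: subfield_def)

locale ksp = fixes K :: "'a::{field,finite} set" and W :: "('m::finite \<Rightarrow> 'a) set"
  assumes sf: "subfield K" and sub: "Ksubspace K W"
begin
lemma zero[simp]: "0 \<in> W" using sub by (simp add: Ksubspace_iff)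
lemma add: "u \<in> W \<Longrightarrow> v \<in> W \<Longrightarrow> u + v \<in> W" using sub by (simp add: Ksubspace_iff)
lemma smul: "c \<in> K \<Longrightarrow> v \<in> W \<Longrightarrow> smul c v \<in> W" using sub by (simp add: Ksubspace_iff)
lemma neg: "v \<in> W \<Longrightarrow> - v \<in> W"
proof -
  assume "v \<in> W"
  have "-1 \<in> K" using sf by (simp add: subfield_def)
  with smul[OF this \<open>v\<in>W\<close>] show ?thesis by (simp add: smul_neg)
qed
lemma diff: "u \<in> W \<Longrightarrow> v \<in> W \<Longrightarrow> u - v \<in> W"
  using add[OF _ neg] by (metis diff_conv_add_uminus)
end

lemma subfield_props: assumes "subfield K"
  shows "0 \<in> K" "1 \<in> K" "a \<in> K \<Longrightarrow> b \<in> K \<Longrightarrow> a + b \<in> K" "a \<in> K \<Longrightarrow> b \<in> K \<Longrightarrow> a * b \<in> K"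
    "a \<in> K \<Longrightarrow> - a \<in> K" "a \<in> K \<Longrightarrow> inverse a \<in> K"
  using assms by (auto simp: subfield_def)

lemma subfield_diff: "subfield K \<Longrightarrow> a \<in> K \<Longrightarrow> b \<in> K \<Longrightarrow> a - b \<in> K"
  using subfield_props(3,5) by (metis diff_conv_add_uminus)

lemma subfield_card: "subfield (K::'a::{field,finite} set) \<Longrightarrow> card K \<ge> 2"
proof -
  assume "subfield K"
  then have "{0,1} \<subseteq> K" by (simp add: subfield_def)
  then have "card {0::'a,1} \<le> card K" by (intro card_mono) auto
  then show ?thesis by simp
qed

lemma ext_step:
  fixes K :: "'a::{field,finite} set" and W0 :: "('m::finite \<Rightarrow> 'a) set"
  assumes sf: "subfield K" and s0: "Ksubspace K W0" and w: "w \<notin> W0"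
  defines "W1 \<equiv> (\<lambda>(x,c). x + smul c w) ` (W0 \<times> K)"
  shows "Ksubspace K W1" "W0 \<subseteq> W1" "card W1 = card W0 * card K"
    "Ksubspace K W \<Longrightarrow> W0 \<subseteq> W \<Longrightarrow> w \<in> W \<Longrightarrow> W1 \<subseteq> W"
proof -
  interpret k0: ksp K W0 using sf s0 by unfold_locales
  note sp = subfield_props[OF sf]
  show "Ksubspace K W1" unfolding Ksubspace_iff
  proof (intro conjI ballI)
    show "0 \<in> W1" unfolding W1_def using sp(1)
      by (intro image_eqI[of _ _ "(0,0)"]) auto
  next
    fix u v assume "u \<in> W1" "v \<in> W1"
    then obtain x c y d where "x \<in> W0" "c \<in> K" "y \<in> W0" "d \<in> K" "u = x + smul c w" "v = y + smul d w"
      unfolding W1_def by auto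
    then show "u + v \<in> W1" unfolding W1_def
      by (intro image_eqI[of _ _ "(x+y,c+d)"]) (auto simp: smul_add2 algebra_simps k0.add sp)
  next
    fix a v assume "a \<in> K" "v \<in> W1"
    then obtain y d where "y \<in> W0" "d \<in> K" "v = y + smul d w"
      unfolding W1_def by auto
    then show "smul a v \<in> W1" unfolding W1_def using \<open>a\<in>K\<close>
      by (intro image_eqI[of _ _ "(smul a y,a*d)"]) (auto simp: smul_add smul_smul k0.smul sp)
  qed
  show "W0 \<subseteq> W1" unfolding W1_def using sp(1) by (auto intro!: image_eqI)
  have "inj_on (\<lambda>(x,c). x + smul c w) (W0 \<times> K)"
  proof (rule inj_onI, clarsimp)
    fix x c y d assume h: "x \<in> W0" "c \<in> K" "y \<in> W0" "d \<in> K" "x + smul c w = y + smul d w"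
    then have e: "smul (c - d) w = y - x" by (simp add: smul_diff2 algebra_simps)
    show "x = y \<and> c = d"
    proof (cases "c = d")
      case True then show ?thesis using h by simp
    next
      case False
      then have "w = smul (inverse (c - d)) (y - x)" using e smul_inv[of "c-d" w] by simp
      moreover have "smul (inverse (c - d)) (y - x) \<in> W0"
        using h by (intro k0.smul k0.diff sp subfield_diff[OF sf]) auto
      ultimately show ?thesis using w by simp
    qed
  qed
  then show "card W1 = card W0 * card K" unfolding W1_def
    by (simp add: card_image card_cartesian_product)
  show "Ksubspace K W \<Longrightarrow> W0 \<subseteq> W \<Longrightarrow> w \<in> W \<Longrightarrow> W1 \<subseteq> W"
  proof -
    assume a: "Ksubspace K W" "W0 \<subseteq> W" "w \<in> W"
    interpret k: ksp K W using sf a(1) by unfold_locales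
    show ?thesis unfolding W1_def using a by (auto intro!: k.add k.smul)
  qed
qed

lemma card_step:
  fixes K :: "'a::{field,finite} set" and W0 :: "('m::finite \<Rightarrow> 'a) set"
  assumes sf: "subfield K" and s0: "Ksubspace K W0" and s: "Ksubspace K W" and sub: "W0 \<subset> W"
  shows "card W0 * card K \<le> card W"
proof -
  obtain w where w: "w \<in> W" "w \<notin> W0" using sub by auto
  define W1 where "W1 = (\<lambda>(x,c). x + smul c w) ` (W0 \<times> K)"
  have "W1 \<subseteq> W" "card W1 = card W0 * card K"
    using ext_step[OF sf s0 w(2)] s sub w(1) unfolding W1_def by auto
  then show ?thesis by (metis card_mono finite)
qed

lemma card_rel:
  fixes K :: "'a::{field,finite} set" and W0 :: "('m::finite \<Rightarrow> 'a) set"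
  assumes sf: "subfield K" and s: "Ksubspace K W"
  shows "Ksubspace K W0 \<Longrightarrow> W0 \<subseteq> W \<Longrightarrow> \<exists>e. card W = card W0 * card K ^ e"
proof (induct "card W - card W0" arbitrary: W0 rule: less_induct)
  case less
  show ?case
  proof (cases "W0 = W")
    case True then show ?thesis by (intro exI[of _ 0]) simp
  next
    case False
    then obtain w where w: "w \<in> W" "w \<notin> W0" using less by auto
    define W1 where "W1 = (\<lambda>(x,c). x + smul c w) ` (W0 \<times> K)"
    have W1: "Ksubspace K W1" "W0 \<subseteq> W1" "card W1 = card W0 * card K" "W1 \<subseteq> W"
      using ext_step[OF sf less(2) w(2)] s less(3) w(1) unfolding W1_def by auto
    have "card W0 < card W1" using W1(3) subfield_card[OF sf] less(2)
      by (metis ksp.zero ksp.intro sf card_gt_0_iff empty_iff finite nat_mult_less_cancel1 mult.right_neutral one_less_numeral_iff semiring_norm(76) less_le_trans)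
    moreover have "card W1 \<le> card W" using W1(4) by (simp add: card_mono)
    ultimately obtain e where "card W = card W1 * card K ^ e"
      using less(1)[OF _ W1(1) W1(4)] by (metis diff_less_mono2 less_le_trans)
    then show ?thesis using W1(3) by (intro exI[of _ "Suc e"]) simp
  qed
qed

lemma card_pow:
  fixes K :: "'a::{field,finite} set" and W :: "('m::finite \<Rightarrow> 'a) set"
  assumes sf: "subfield K" and s: "Ksubspace K W"
  shows "card W = card K ^ Kdim K W"
proof -
  have z: "Ksubspace K {0}" by (simp add: Ksubspace_iff)
  have "0 \<in> W" using s by (simp add: Ksubspace_iff)
  then obtain e where e: "card W = card K ^ e" using card_rel[OF sf s z] by auto
  have "Kdim K W = e" unfolding Kdim_def
    by (rule the_equality) (use e subfield_card[OF sf] in \<open>auto dest: power_inject_exp[THEN iffD1, rotated]\<close>)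
  then show ?thesis using e by simp
qed

lemma Kdim_card: assumes "subfield (K::'a::{field,finite} set)" "card W = card K ^ d"
  shows "Kdim K W = d"
  unfolding Kdim_def using assms subfield_card[OF assms(1)]
  by (intro the_equality) (auto dest: power_inject_exp[THEN iffD1, rotated])

lemma Ksub_Int: "Ksubspace K A \<Longrightarrow> Ksubspace K B \<Longrightarrow> Ksubspace K (A \<inter> B)"
  by (simp add: Ksubspace_iff)
lemma Ksub_UNIV: "Ksubspace UNIV A \<Longrightarrow> Ksubspace K A"
  by (simp add: Ksubspace_iff)

lemma pt_sub: "Ksubspace K (pt u)"
  unfolding Ksubspace_iff pt_def
  by (auto simp: smul_add2[symmetric] smul_smul intro: exI[of _ 0])
lemma pt_self: "u \<in> pt u" unfolding pt_def by (auto intro: exI[of _ 1])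
lemma pt_zero: "0 \<in> pt u" unfolding pt_def by (auto intro: exI[of _ 0])
lemma pt_smul: "smul c u \<in> pt u" unfolding pt_def by auto
lemma pt_in: "Ksubspace UNIV W \<Longrightarrow> u \<in> W \<Longrightarrow> pt u \<subseteq> W"
  unfolding pt_def Ksubspace_iff by auto
lemma card_pt: "(u::'m::finite \<Rightarrow> 'a::{field,finite}) \<noteq> 0 \<Longrightarrow> card (pt u) = CARD('a)"
proof -
  assume u: "u \<noteq> 0"
  have "pt u = (\<lambda>c. smul c u) ` UNIV" unfolding pt_def by auto
  moreover have "inj (\<lambda>c. smul c u)" using smul_cancel[OF u] by (auto intro: injI)
  ultimately show ?thesis by (simp add: card_image)
qed
lemma card_Kpt: "(u::'m::finite \<Rightarrow> 'a::{field,finite}) \<noteq> 0 \<Longrightarrow> card ((\<lambda>c. smul c u) ` K) = card K"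
  by (rule card_image) (auto intro: inj_onI simp: smul_cancel)
lemma pt_eq: "x \<in> pt u \<Longrightarrow> (x::'m::finite \<Rightarrow> 'a::{field,finite}) \<noteq> 0 \<Longrightarrow> pt x = pt u"
proof -
  assume "x \<in> pt u" "x \<noteq> 0"
  then obtain c where c: "x = smul c u" unfolding pt_def by auto
  with \<open>x \<noteq> 0\<close> have c2: "c \<noteq> 0" by auto
  note c = c c2
  then have "u = smul (inverse c) x" by (simp add: smul_inv)
  then show ?thesis unfolding pt_def using c
    apply (auto simp: smul_smul)
    subgoal for d by (rule exI[of _ "d * inverse c"]) (simp add: field_simps)
    done
qed
lemma pt_eq_smul: "x \<in> pt u \<Longrightarrow> \<exists>c. x = smul c u" unfolding pt_def by auto

lemma scat_K:
  fixes K :: "'a::{field,finite} set" and U :: "('m::finite \<Rightarrow> 'a) set"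
  assumes sf: "subfield K" and sU: "Ksubspace K U" and sc: "scattered K U"
    and u: "u \<in> U" "u \<noteq> 0" and a: "smul a u \<in> U"
  shows "a \<in> K"
proof -
  have "pt u \<in> linset U" unfolding linset_def using u by (auto simp: vzero_eq)
  then have "Kdim K (pt u \<inter> U) = 1" using sc by (simp add: scattered_def weight_def)
  then have c: "card (pt u \<inter> U) = card K"
    using card_pow[OF sf Ksub_Int[OF pt_sub sU]] by simp
  interpret k: ksp K U using sf sU by unfold_locales
  have "(\<lambda>c. smul c u) ` K \<subseteq> pt u \<inter> U" using pt_smul k.smul u by auto
  then have "(\<lambda>c. smul c u) ` K = pt u \<inter> U" using c card_Kpt[OF u(2)]
    by (metis card_subset_eq finite)
  moreover have "smul a u \<in> pt u \<inter> U" using a pt_smul by auto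
  ultimately obtain c where "c \<in> K" "smul a u = smul c u" by auto
  then show ?thesis using smul_cancel[OF u(2)] by simp
qed

lemma scat_pt_card:
  fixes K :: "'a::{field,finite} set" and U :: "('m::finite \<Rightarrow> 'a) set"
  assumes sf: "subfield K" and sU: "Ksubspace K U" and sc: "scattered K U"
    and P: "P \<in> linset U"
  shows "card (P \<inter> U) = card K"
proof -
  have "Kdim K (P \<inter> U) = 1" using sc P by (simp add: scattered_def weight_def)
  moreover obtain u where "P = pt u" using P unfolding linset_def by auto
  ultimately show ?thesis using card_pow[OF sf Ksub_Int[OF pt_sub sU]] by simp
qed

lemma scat_count:
  fixes K :: "'a::{field,finite} set" and U :: "('m::finite \<Rightarrow> 'a) set"
  assumes sf: "subfield K" and sU: "Ksubspace K U" and sc: "scattered K U"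
    and l: "Ksubspace UNIV l"
  shows "card (l \<inter> U) = 1 + (card K - 1) * card {P \<in> linset U. P \<subseteq> l}"
proof -
  let ?I = "{P \<in> linset U. P \<subseteq> l}"
  have eq: "l \<inter> U - {0} = (\<Union>P\<in>?I. P \<inter> U - {0})"
  proof
    show "l \<inter> U - {0} \<subseteq> (\<Union>P\<in>?I. P \<inter> U - {0})"
    proof
      fix x assume x: "x \<in> l \<inter> U - {0}"
      then have "pt x \<in> ?I" using pt_in[OF l] unfolding linset_def by (auto simp: vzero_eq)
      then show "x \<in> (\<Union>P\<in>?I. P \<inter> U - {0})" using x pt_self by blast
    qed
  qed auto
  have "card (l \<inter> U - {0}) = (\<Sum>P\<in>?I. card (P \<inter> U - {0}))"
    unfolding eq
  proof (rule card_UN_disjoint)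
    show "\<forall>i\<in>?I. \<forall>j\<in>?I. i \<noteq> j \<longrightarrow> (i \<inter> U - {0}) \<inter> (j \<inter> U - {0}) = {}"
    proof (intro ballI impI)
      fix i j assume ij: "i \<in> ?I" "j \<in> ?I" "i \<noteq> j"
      obtain a b where "i = pt a" "j = pt b" using ij unfolding linset_def by auto
      then show "(i \<inter> U - {0}) \<inter> (j \<inter> U - {0}) = {}" using ij(3) pt_eq by blast
    qed
  qed auto
  also have "\<dots> = (\<Sum>P\<in>?I. card K - 1)"
  proof (rule sum.cong)
    fix P assume "P \<in> ?I"
    moreover have "0 \<in> P" using \<open>P \<in> ?I\<close> pt_zero unfolding linset_def by auto
    ultimately show "card (P \<inter> U - {0}) = card K - 1"
      using scat_pt_card[OF sf sU sc] ksp.zero[OF ksp.intro[OF sf sU]] by (simp add: card_Diff_singleton)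
  qed simp
  finally have "card (l \<inter> U - {0}) = card ?I * (card K - 1)" by simp
  moreover have "0 \<in> l \<inter> U" using l sU by (simp add: Ksubspace_iff)
  then have "Suc (card (l \<inter> U - {0})) = card (l \<inter> U)" by (intro card_Suc_Diff1) auto
  ultimately show ?thesis by (simp add: mult.commute)
qed


lemma cover_lemma:
  fixes A :: "'i \<Rightarrow> 'b set"
  assumes I: "finite I" and X: "finite X" and sub0: "\<forall>i\<in>I. A i \<subseteq> X"
    and dj: "\<forall>i\<in>I. \<forall>j\<in>I. i \<noteq> j \<longrightarrow> A i \<inter> A j = {}"
    and k: "\<forall>i\<in>I. k \<le> card (A i)" and c: "card I * k = card X"
  shows "(\<Union>i\<in>I. A i) = X" "\<forall>i\<in>I. card (A i) = k"
proof -
  have fin: "\<forall>i\<in>I. finite (A i)" using X sub0 finite_subset by blast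
  have cu: "card (\<Union>i\<in>I. A i) = (\<Sum>i\<in>I. card (A i))" using card_UN_disjoint[OF I fin dj] .
  have ge: "card I * k \<le> (\<Sum>i\<in>I. card (A i))" using sum_mono[of I "\<lambda>_. k" "\<lambda>i. card (A i)"] k by simp
  have sub: "(\<Union>i\<in>I. A i) \<subseteq> X" using sub0 by auto
  have le: "card (\<Union>i\<in>I. A i) \<le> card X" using card_mono[OF X sub] .
  show "(\<Union>i\<in>I. A i) = X" using card_subset_eq[OF X sub] cu ge le c by simp
  show "\<forall>i\<in>I. card (A i) = k"
  proof (rule ccontr)
    assume "\<not> ?thesis"
    then obtain j where "j\<in>I" "card (A j) \<noteq> k" by auto
    then have "(\<Sum>i\<in>I. k) < (\<Sum>i\<in>I. card (A i))" using k
      by (intro sum_strict_mono_ex1[OF I]) (auto intro!: bexI[of _ j])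
    then show False using cu le c by (simp add: mult.commute)
  qed
qed

lemma span2:
  fixes s :: "('m::finite \<Rightarrow> 'a::{field,finite}) set"
  assumes s: "Ksubspace UNIV s" and cs: "card s = CARD('a)^2" and ab: "a \<in> s" "b \<in> s"
    and a0: "a \<noteq> 0" and b: "b \<notin> pt a"
  shows "s = (\<lambda>(c,d). smul c a + smul d b) ` (UNIV \<times> UNIV)"
proof -
  interpret k: ksp UNIV s using subfield_UNIV s by unfold_locales
  have inj: "inj_on (\<lambda>(c,d). smul c a + smul d b) (UNIV \<times> UNIV)"
  proof (rule inj_onI)
    fix x y :: "'a \<times> 'a"
    assume e0: "(\<lambda>(c,d). smul c a + smul d b) x = (\<lambda>(c,d). smul c a + smul d b) y"
    obtain c d c' d' where xy: "x = (c,d)" "y = (c',d')" by (cases x, cases y)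
    from e0 have e: "smul c a + smul d b = smul c' a + smul d' b" using xy by simp
    show "x = y"
    proof (cases "d = d'")
      case True then show ?thesis using e smul_cancel[OF a0] xy by simp
    next
      case False
      have "smul (d - d') b = smul (c' - c) a" using e by (simp add: smul_diff2 algebra_simps)
      then have "b = smul (inverse (d - d')) (smul (c' - c) a)" using smul_inv[of "d-d'" b] False by simp
      then have "b \<in> pt a" by (simp add: smul_smul pt_smul)
      then show ?thesis using b by simp
    qed
  qed
  have c: "card ((\<lambda>(c,d). smul c a + smul d b) ` (UNIV \<times> UNIV)) = CARD('a)^2"
    using card_image[OF inj] by (simp add: card_cartesian_product power2_eq_square)
  have "(\<lambda>(c,d). smul c a + smul d b) ` (UNIV \<times> UNIV) \<subseteq> s"
    using ab by (auto intro!: k.add k.smul)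
  then show ?thesis using c cs by (metis card_subset_eq finite)
qed

lemma dvd_pow_minus1: "(Q::nat) \<ge> 1 \<Longrightarrow> (Q - 1) dvd (Q ^ n - 1)"
proof (induct n)
  case (Suc n)
  have "Q ^ Suc n - 1 = Q * (Q ^ n - 1) + (Q - 1)"
    using Suc.prems by (simp add: algebra_simps diff_mult_distrib2)
  then show ?case using Suc(1)[OF Suc.prems] by (metis dvd_add dvd_mult dvd_refl)
qed simp

lemma arith_contra: fixes N A D w q Q :: nat
  assumes AqN: "A * q \<le> N" and NAD: "N = A + D" and Dw: "D < w" and wQ: "w * Q \<le> N" and q2: "q \<ge> 2" and qQ: "q < Q"
  shows False
proof -
      have 1: "N * q \<le> N + D * q" using AqN NAD by (simp add: algebra_simps)
      have 2: "D * q < w * q" using Dw q2 by simp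
      have 4: "w * Q + w * q \<le> w * Q * q"
      proof -
        have "Q * 2 \<le> Q * q" using q2 by simp
        then have "Q + q \<le> Q * q" using qQ by linarith
        then have "w * (Q + q) \<le> w * (Q * q)" by (rule mult_le_mono2)
        then show ?thesis by (simp add: algebra_simps)
      qed
      obtain r where r: "N = w * Q + r" using wQ le_iff_add by blast
      have 5: "r * 1 \<le> r * q" using q2 by (intro mult_le_mono2) linarith
      have 6: "w * Q * q + N \<le> N * q + w * Q"
        unfolding r using 5 by (simp add: algebra_simps)
      show False using 1 2 4 6 by linarith
qed

locale PR =
  fixes K :: "'a::{field,finite} set" and U :: "('m::finite \<Rightarrow> 'a) set"
    and S :: "('m \<Rightarrow> 'a) set set" and n t :: nat
  assumes n2: "n \<ge> 2" and t3: "t \<ge> 3" and sf: "subfield K" and cF: "CARD('a) = card K ^ t"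
    and cm: "CARD('m) = 2 * n" and pr: "pseudoregulus_type K n t U S"
begin

lemma q2: "card K \<ge> 2" using subfield_card[OF sf] .
lemma qQ: "card K < CARD('a)"
proof -
  have "card K ^ 1 < card K ^ t" using q2 t3 by (intro power_strict_increasing) auto
  then show ?thesis using cF by simp
qed
lemma qqQ: "card K * card K < CARD('a)"
proof -
  have "card K ^ 2 < card K ^ t" using q2 t3 by (intro power_strict_increasing) auto
  then show ?thesis using cF by (simp add: power2_eq_square)
qed
lemma Q2: "CARD('a) \<ge> 2" using q2 qQ by simp

lemma sU: "Ksubspace K U" using pr by (simp add: pseudoregulus_type_def)
lemma scU: "scattered K U" using pr by (simp add: pseudoregulus_type_def)
lemma cU: "card U = CARD('a) ^ n"
proof -
  have "card U = card K ^ (t * n)" using card_pow[OF sf sU] pr by (simp add: pseudoregulus_type_def)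
  then show ?thesis using cF by (simp add: power_mult)
qed
lemma U0: "0 \<in> U" using sU by (simp add: Ksubspace_iff)
lemma kU: "ksp K U" using sf sU by unfold_locales

lemma S_line: assumes "s \<in> S"
  shows "Ksubspace UNIV s" "card s = CARD('a)^2" "card (s \<inter> U) = CARD('a)"
proof -
  have l: "is_line s" "weight K U s = t" using pr assms by (auto simp: pseudoregulus_type_def)
  then show ks: "Ksubspace UNIV s" by (simp add: is_line_def proj_subspace_def)
  show "card s = CARD('a)^2" using l card_pow[OF subfield_UNIV ks]
    by (simp add: is_line_def proj_subspace_def power2_eq_square)
  show "card (s \<inter> U) = CARD('a)" using l card_pow[OF sf Ksub_Int[OF Ksub_UNIV[OF ks] sU]] cF
    by (simp add: weight_def)
qed
lemma S0: "s \<in> S \<Longrightarrow> 0 \<in> s" using S_line(1) by (simp add: Ksubspace_iff)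
lemma kS: "s \<in> S \<Longrightarrow> ksp UNIV s" using S_line(1) subfield_UNIV by (simp add: ksp_def)

lemma S_disj: "s1 \<in> S \<Longrightarrow> s2 \<in> S \<Longrightarrow> s1 \<noteq> s2 \<Longrightarrow> x \<in> s1 \<Longrightarrow> x \<in> s2 \<Longrightarrow> x = 0"
  using pr by (auto simp: pseudoregulus_type_def proj_meet_def vzero_eq)

lemma cS: "card S * (CARD('a) - 1) = CARD('a)^n - 1"
proof -
  have e: "card K ^ (n * t) = CARD('a)^n" unfolding cF power_mult[symmetric] by (simp add: mult.commute)
  have "card S = (card K ^ (n * t) - 1) div (card K ^ t - 1)"
    using pr unfolding pseudoregulus_type_def by blast
  then have "card S = (CARD('a)^n - 1) div (CARD('a) - 1)" unfolding e cF[symmetric] .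
  moreover have "(CARD('a) - 1) dvd (CARD('a)^n - 1)" using Q2 by (intro dvd_pow_minus1) simp
  ultimately show ?thesis by simp
qed

lemma finS: "finite S" by simp

lemma cV: "CARD('m \<Rightarrow> 'a) = CARD('a) ^ (2*n)" using cm n2 by (simp add: card_fun)

lemma T_props: assumes "T \<in> transversals n U S"
  shows "Ksubspace UNIV T" "card T = CARD('a)^n" "\<And>u. u \<in> T \<Longrightarrow> u \<in> U \<Longrightarrow> u = 0"
    "\<forall>s\<in>S. \<exists>u. u \<noteq> 0 \<and> u \<in> T \<and> u \<in> s"
proof -
  have h: "proj_subspace (n - 1) T" "\<forall>P\<in>linset U. \<not> P \<subseteq> T" "\<forall>s\<in>S. proj_meet T s"
    using assms by (auto simp: transversals_def)
  then show ks: "Ksubspace UNIV T" by (simp add: proj_subspace_def)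
  show "card T = CARD('a)^n" using h(1) n2 card_pow[OF subfield_UNIV ks] by (simp add: proj_subspace_def)
  show "\<And>u. u \<in> T \<Longrightarrow> u \<in> U \<Longrightarrow> u = 0"
  proof (rule ccontr)
    fix u assume "u \<in> T" "u \<in> U" "u \<noteq> 0"
    then have "pt u \<in> linset U" "pt u \<subseteq> T" using pt_in[OF ks] unfolding linset_def by (auto simp: vzero_eq)
    then show False using h(2) by auto
  qed
  show "\<forall>s\<in>S. \<exists>u. u \<noteq> 0 \<and> u \<in> T \<and> u \<in> s" using h(3) by (auto simp: proj_meet_def vzero_eq)
qed

lemma cover_T: assumes T: "T \<in> transversals n U S"
  shows "\<And>x. x \<in> T \<Longrightarrow> x \<noteq> 0 \<Longrightarrow> \<exists>s\<in>S. x \<in> s"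
    "\<And>s. s \<in> S \<Longrightarrow> \<exists>a. a \<noteq> 0 \<and> s \<inter> T = pt a"
proof -
  note tp = T_props[OF T]
  obtain f where f: "\<forall>s\<in>S. f s \<noteq> 0 \<and> f s \<in> T \<and> f s \<in> s" using tp(4) by metis
  have ptf: "\<forall>s\<in>S. pt (f s) - {0} \<subseteq> s \<inter> T - {0}"
    using f pt_in[OF tp(1)] pt_in[OF S_line(1)] by blast
  have cpt: "\<forall>s\<in>S. card (pt (f s) - {0}) = CARD('a) - 1"
    using f by (auto simp: card_Diff_singleton card_pt pt_zero)
  have cT: "card (T - {0}) = CARD('a)^n - 1"
    using tp(1,2) by (simp add: card_Diff_singleton Ksubspace_iff)
  have ge: "\<forall>s\<in>S. CARD('a) - 1 \<le> card (s \<inter> T - {0})"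
  proof
    fix s assume "s \<in> S"
    then show "CARD('a) - 1 \<le> card (s \<inter> T - {0})"
      using card_mono[OF _ ptf[rule_format, OF \<open>s\<in>S\<close>]] cpt \<open>s\<in>S\<close> by simp
  qed
  have dj: "\<forall>i\<in>S. \<forall>j\<in>S. i \<noteq> j \<longrightarrow> (i \<inter> T - {0}) \<inter> (j \<inter> T - {0}) = {}"
    using S_disj by blast
  have cl: "(\<Union>s\<in>S. s \<inter> T - {0}) = T - {0}" "\<forall>s\<in>S. card (s \<inter> T - {0}) = CARD('a) - 1"
    using cover_lemma[of S "T - {0}" "\<lambda>s. s \<inter> T - {0}" "CARD('a) - 1", OF finS _ _ dj ge] cT cS
    by auto
  show "\<And>x. x \<in> T \<Longrightarrow> x \<noteq> 0 \<Longrightarrow> \<exists>s\<in>S. x \<in> s" using cl(1) by blast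
  fix s assume s: "s \<in> S"
  have "pt (f s) - {0} = s \<inter> T - {0}" using ptf cpt cl(2) s by (metis card_subset_eq finite)
  then have "pt (f s) = s \<inter> T" using pt_zero S0[OF s] tp(1) by (auto simp: Ksubspace_iff)
  then show "\<exists>a. a \<noteq> 0 \<and> s \<inter> T = pt a" using f s by metis
qed

lemma cover_U: "u \<in> U \<Longrightarrow> u \<noteq> 0 \<Longrightarrow> \<exists>s\<in>S. u \<in> s"
proof -
  assume u: "u \<in> U" "u \<noteq> 0"
  have cU0: "card (U - {0}) = CARD('a)^n - 1" using cU U0 by (simp add: card_Diff_singleton)
  have "(\<Union>s\<in>S. s \<inter> U - {0}) = U - {0}"
  proof (rule cover_lemma[of S "U - {0}" "\<lambda>s. s \<inter> U - {0}" "CARD('a) - 1", OF finS])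
    show "\<forall>i\<in>S. \<forall>j\<in>S. i \<noteq> j \<longrightarrow> (i \<inter> U - {0}) \<inter> (j \<inter> U - {0}) = {}"
      using S_disj by blast
    show "\<forall>i\<in>S. CARD('a) - 1 \<le> card (i \<inter> U - {0})"
      using S_line(3) S0 U0 by (simp add: card_Diff_singleton)
  qed (use cU0 cS in auto)
  then show ?thesis using u by blast
qed

lemma T_meet: assumes T1: "T1 \<in> transversals n U S" and T2: "T2 \<in> transversals n U S"
  and ne: "T1 \<noteq> T2" and x: "x \<in> T1" "x \<in> T2" shows "x = 0"
proof -
  note tp1 = T_props[OF T1] and tp2 = T_props[OF T2]
  interpret k1: ksp UNIV T1 using subfield_UNIV tp1(1) by unfold_locales
  interpret k2: ksp UNIV T2 using subfield_UNIV tp2(1) by unfold_locales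
  interpret kU: ksp K U by (rule kU)
  define M where "M = (\<lambda>(a,b). a + b) ` (T1 \<times> T2)"
  have kM: "Ksubspace UNIV M" unfolding Ksubspace_iff
  proof (intro conjI ballI)
    show "0 \<in> M" unfolding M_def by (rule image_eqI[of _ _ "(0,0)"]) auto
  next
    fix u v assume "u \<in> M" "v \<in> M"
    then obtain a b a' b' where "a \<in> T1" "b \<in> T2" "a' \<in> T1" "b' \<in> T2" "u = a + b" "v = a' + b'"
      unfolding M_def by auto
    then have e: "u + v = (a+a') + (b+b')" by (simp add: add.assoc add.left_commute)
    have "a + a' \<in> T1" "b + b' \<in> T2" using k1.add k2.add \<open>a \<in> T1\<close> \<open>b \<in> T2\<close> \<open>a' \<in> T1\<close> \<open>b' \<in> T2\<close> by blast+
    then have "(a+a',b+b') \<in> T1 \<times> T2" by blast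
    then show "u + v \<in> M" unfolding M_def e by (rule rev_image_eqI) simp
  next
    fix c v assume "v \<in> M"
    then obtain a b where "a \<in> T1" "b \<in> T2" "v = a + b" unfolding M_def by auto
    then have e: "smul c v = smul c a + smul c b" by (simp add: smul_add)
    have "(smul c a, smul c b) \<in> T1 \<times> T2" using k1.smul k2.smul \<open>a \<in> T1\<close> \<open>b \<in> T2\<close> by blast
    then show "smul c v \<in> M" unfolding M_def e by (rule rev_image_eqI) simp
  qed
  interpret kM: ksp UNIV M using subfield_UNIV kM by unfold_locales
  define W where "W = T1 \<inter> T2"
  have UM: "U \<subseteq> M"
  proof (rule ccontr)
    assume nUM: "\<not> U \<subseteq> M"
    define bad where "bad = {s\<in>S. s \<inter> T1 = s \<inter> T2}"
    have good: "s \<subseteq> M" if s: "s \<in> S" "s \<notin> bad" for s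
    proof -
      obtain a where a: "a \<noteq> 0" "s \<inter> T1 = pt a" using cover_T(2)[OF T1 s(1)] by blast
      obtain b where b: "b \<noteq> 0" "s \<inter> T2 = pt b" using cover_T(2)[OF T2 s(1)] by blast
      have "s \<inter> T1 \<noteq> s \<inter> T2" using s unfolding bad_def by blast
      then have pab: "pt a \<noteq> pt b" using a(2) b(2) by simp
      have "b \<notin> pt a"
      proof
        assume "b \<in> pt a"
        then have "pt b = pt a" using b(1) by (rule pt_eq)
        then show False using pab by simp
      qed
      moreover have "a \<in> s" "b \<in> s" using a(2) b(2) pt_self by blast+
      ultimately have sd: "s = (\<lambda>(c,d). smul c a + smul d b) ` (UNIV \<times> UNIV)"
        using span2[OF S_line(1)[OF s(1)] S_line(2)[OF s(1)] _ _ a(1)] by blast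
      have mem: "smul c a + smul d b \<in> M" for c d
      proof -
        have "smul c a \<in> T1" "smul d b \<in> T2" using a b pt_smul by blast+
        then show ?thesis unfolding M_def by (intro image_eqI[of _ _ "(smul c a, smul d b)"]) auto
      qed
      show ?thesis
      proof
        fix x assume "x \<in> s"
        then have "x \<in> (\<lambda>(c,d). smul c a + smul d b) ` (UNIV \<times> UNIV)" using sd by simp
        then obtain c d where "x = smul c a + smul d b" by auto
        then show "x \<in> M" using mem by simp
      qed
    qed
    have D: "U - M \<subseteq> (\<Union>s\<in>bad. s \<inter> U - {0})"
    proof
      fix u assume u: "u \<in> U - M"
      then have "u \<noteq> 0" using kM.zero by auto
      then obtain s where "s \<in> S" "u \<in> s" using cover_U u by auto
      then show "u \<in> (\<Union>s\<in>bad. s \<inter> U - {0})" using good u \<open>u \<noteq> 0\<close> by blast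
    qed
    have fbad: "finite bad" by simp
    have cD: "card (U - M) \<le> card bad * (CARD('a) - 1)"
    proof -
      have "card (U - M) \<le> card (\<Union>s\<in>bad. s \<inter> U - {0})" using D by (simp add: card_mono)
      also have "\<dots> \<le> (\<Sum>s\<in>bad. card (s \<inter> U - {0}))" by (rule card_UN_le[OF fbad])
      also have "\<dots> = (\<Sum>s\<in>bad. CARD('a) - 1)"
        by (rule sum.cong) (auto simp: bad_def S_line(3) S0 U0 card_Diff_singleton)
      finally show ?thesis by simp
    qed
    have cbad: "card bad * (CARD('a) - 1) \<le> card W - 1"
    proof -
      have c1: "card (s \<inter> T1 - {0}) = CARD('a) - 1" if sb: "s \<in> bad" for s
      proof -
        have "s \<in> S" using sb unfolding bad_def by blast
        then obtain a where a: "a \<noteq> 0" "s \<inter> T1 = pt a" using cover_T(2)[OF T1] by blast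
        then show ?thesis by (simp add: card_pt pt_zero card_Diff_singleton)
      qed
      have dj: "\<forall>i\<in>bad. \<forall>j\<in>bad. i \<noteq> j \<longrightarrow> (i \<inter> T1 - {0}) \<inter> (j \<inter> T1 - {0}) = {}"
      proof (intro ballI impI)
        fix i j assume "i \<in> bad" "j \<in> bad" "i \<noteq> j"
        then have "i \<in> S" "j \<in> S" by (simp_all add: bad_def)
        then show "(i \<inter> T1 - {0}) \<inter> (j \<inter> T1 - {0}) = {}" using S_disj \<open>i \<noteq> j\<close> by blast
      qed
      have "card bad * (CARD('a) - 1) = (\<Sum>s\<in>bad. card (s \<inter> T1 - {0}))" using c1 by simp
      also have "\<dots> = card (\<Union>s\<in>bad. s \<inter> T1 - {0})"
        by (rule card_UN_disjoint[symmetric, OF fbad _ dj]) simp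
      also have "\<dots> \<le> card (W - {0})"
      proof (rule card_mono)
        show "(\<Union>s\<in>bad. s \<inter> T1 - {0}) \<subseteq> W - {0}"
        proof
          fix x assume "x \<in> (\<Union>s\<in>bad. s \<inter> T1 - {0})"
          then obtain s where "s \<in> bad" "x \<in> s \<inter> T1" "x \<noteq> 0" by blast
          then have "x \<in> s \<inter> T2" unfolding bad_def by blast
          then show "x \<in> W - {0}" using \<open>x \<in> s \<inter> T1\<close> \<open>x \<noteq> 0\<close> unfolding W_def by blast
        qed
      qed simp
      moreover have "card (W - {0}) = card W - 1"
        using k1.zero k2.zero unfolding W_def by (intro card_Diff_singleton) blast
      ultimately show ?thesis by linarith
    qed
    have W1: "W \<noteq> {}" using k1.zero k2.zero unfolding W_def by blast
    then have cW: "card W \<ge> 1" by (simp add: Suc_leI card_gt_0_iff)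
    have Dw: "card (U - M) < card W" using cD cbad cW by linarith
    have UMsub: "U \<inter> M \<subset> U" using nUM by auto
    have AqN: "card (U \<inter> M) * card K \<le> card U"
      by (rule card_step[OF sf Ksub_Int[OF sU Ksub_UNIV[OF kM]] sU UMsub])
    have NAD: "card U = card (U \<inter> M) + card (U - M)"
    proof -
      have "card U = card ((U \<inter> M) \<union> (U - M))" by (rule arg_cong[where f=card]) blast
      also have "\<dots> = card (U \<inter> M) + card (U - M)" by (rule card_Un_disjoint) auto
      finally show ?thesis .
    qed
    have WT1: "W \<subset> T1"
    proof -
      have "W \<noteq> T1"
      proof
        assume "W = T1"
        then have "T1 \<subseteq> T2" unfolding W_def by blast
        then have "T1 = T2" using card_subset_eq[of T2 T1] tp1(2) tp2(2) by simp
        then show False using ne by simp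
      qed
      then show ?thesis unfolding W_def by blast
    qed
    have "card W * card (UNIV::'a set) \<le> card T1"
      using card_step[OF subfield_UNIV Ksub_Int[OF tp1(1) tp2(1)] tp1(1)] WT1 unfolding W_def by blast
    then have wQ: "card W * CARD('a) \<le> card U" using tp1(2) cU by simp
    show False using arith_contra[OF AqN NAD Dw wQ q2 qQ] .
  qed
  have MV: "M = UNIV"
  proof -
    have "K \<noteq> UNIV" using qQ by auto
    then obtain lam where lam: "lam \<notin> K" by auto
    let ?g = "\<lambda>(u,v). u + smul lam v"
    have inj: "inj_on ?g (U \<times> U)"
    proof (rule inj_onI)
      fix x y assume xy: "x \<in> U \<times> U" "y \<in> U \<times> U" and e0: "?g x = ?g y"
      obtain u v u' v' where p: "x = (u,v)" "y = (u',v')" by (cases x, cases y)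
      have e: "smul lam (v - v') = u' - u" using e0 p by (simp add: smul_diff algebra_simps)
      have "v = v'"
      proof (rule ccontr)
        assume "v \<noteq> v'"
        then have "v - v' \<in> U" "v - v' \<noteq> 0" using xy p kU.diff by auto
        moreover have "smul lam (v - v') \<in> U" using e xy p kU.diff by auto
        ultimately show False using scat_K[OF sf sU scU] lam by blast
      qed
      then show "x = y" using e p by simp
    qed
    have "?g ` (U \<times> U) \<subseteq> M"
    proof
      fix z assume "z \<in> ?g ` (U \<times> U)"
      then obtain u v where "u \<in> U" "v \<in> U" "z = u + smul lam v" by auto
      then show "z \<in> M" using UM kM.add kM.smul by blast
    qed
    moreover have "card (?g ` (U \<times> U)) = card U * card U"
      using card_image[OF inj] by (simp add: card_cartesian_product)
    moreover have "card U * card U = CARD('m \<Rightarrow> 'a)"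
      unfolding cU cV mult_2 power_add by simp
    ultimately have "card M \<ge> card (UNIV :: ('m \<Rightarrow> 'a) set)" using card_mono[of M "?g ` (U \<times> U)"] by simp
    moreover have "card M \<le> CARD('m \<Rightarrow> 'a)" by (rule card_mono) simp_all
    ultimately have "card M = CARD('m \<Rightarrow> 'a)" by simp
    then show ?thesis using card_subset_eq[of "UNIV::('m \<Rightarrow> 'a) set" M] by simp
  qed
  let ?h = "\<lambda>(a,b). a + b"
  have "inj_on ?h (T1 \<times> T2)"
  proof (rule eq_card_imp_inj_on)
    show "card (?h ` (T1 \<times> T2)) = card (T1 \<times> T2)"
      using MV[unfolded M_def] cV tp1(2) tp2(2) by (simp add: card_cartesian_product power_add[symmetric] mult_2)
  qed simp
  moreover have "(x,0) \<in> T1 \<times> T2" "(0,x) \<in> T1 \<times> T2" using x by auto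
  moreover have "?h (x,0) = ?h (0,x)" by simp
  ultimately have "(x,0) = (0::'m \<Rightarrow> 'a,x)" using inj_onD by metis
  then show ?thesis by simp
qed

end


context PR begin
lemma trans2: "\<exists>T1 T2. T1 \<in> transversals n U S \<and> T2 \<in> transversals n U S \<and> T1 \<noteq> T2"
proof -
  have "card (transversals n U S) = 2" using pr by (simp add: pseudoregulus_type_def)
  then obtain x y where "transversals n U S = {x,y}" "x \<noteq> y" by (auto simp: card_2_iff)
  then show ?thesis by blast
qed
end

locale PR2 = PR K U S n t for K :: "'a::{field,finite} set" and U :: "('m::finite \<Rightarrow> 'a) set" and S n t +
  fixes T1 T2 assumes T1: "T1 \<in> transversals n U S" and T2: "T2 \<in> transversals n U S" and ne: "T1 \<noteq> T2"
begin

lemma W0: "x \<in> T1 \<Longrightarrow> x \<in> T2 \<Longrightarrow> x = 0" using T_meet[OF T1 T2 ne] .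

lemma k1: "ksp UNIV T1" using subfield_UNIV T_props(1)[OF T1] by (simp add: ksp_def)
lemma k2: "ksp UNIV T2" using subfield_UNIV T_props(1)[OF T2] by (simp add: ksp_def)

lemma uniq: assumes "a \<in> T1" "b \<in> T2" "a' \<in> T1" "b' \<in> T2" "a + b = a' + b'"
  shows "a = a'" "b = b'"
proof -
  have e: "a - a' = b' - b" using assms(5) by (simp add: algebra_simps)
  have "a - a' \<in> T1" using ksp.diff[OF k1] assms by blast
  moreover have "b' - b \<in> T2" using ksp.diff[OF k2] assms by blast
  ultimately have "a - a' \<in> T2" using e by simp
  then have "a - a' = 0" using W0 \<open>a - a' \<in> T1\<close> by blast
  then show "a = a'" by simp
  then show "b = b'" using assms(5) by simp
qed

lemma decomp: "\<exists>a\<in>T1. \<exists>b\<in>T2. v = a + b"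
proof -
  let ?h = "\<lambda>(a,b). a + b"
  have inj: "inj_on ?h (T1 \<times> T2)"
  proof (rule inj_onI)
    fix x y assume "x \<in> T1 \<times> T2" "y \<in> T1 \<times> T2" "?h x = ?h y"
    then show "x = y" using uniq by (cases x, cases y) auto
  qed
  have "card (?h ` (T1 \<times> T2)) = card T1 * card T2" using card_image[OF inj] by (simp add: card_cartesian_product)
  also have "\<dots> = CARD('m \<Rightarrow> 'a)" unfolding T_props(2)[OF T1] T_props(2)[OF T2] cV mult_2 power_add by simp
  finally have "?h ` (T1 \<times> T2) = UNIV" using card_subset_eq[of "UNIV::('m \<Rightarrow> 'a) set" "?h ` (T1 \<times> T2)"] by simp
  then have "v \<in> ?h ` (T1 \<times> T2)" by simp
  then show ?thesis by auto
qed

definition p1 :: "('m \<Rightarrow> 'a) \<Rightarrow> ('m \<Rightarrow> 'a)" where "p1 v = (SOME a. a \<in> T1 \<and> (\<exists>b\<in>T2. v = a + b))"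
definition p2 :: "('m \<Rightarrow> 'a) \<Rightarrow> ('m \<Rightarrow> 'a)" where "p2 v = v - p1 v"

lemma p: "p1 v \<in> T1" "p2 v \<in> T2" "v = p1 v + p2 v"
proof -
  have ex: "\<exists>a. a \<in> T1 \<and> (\<exists>b\<in>T2. v = a + b)" using decomp by blast
  have h: "p1 v \<in> T1 \<and> (\<exists>b\<in>T2. v = p1 v + b)" unfolding p1_def by (rule someI_ex[OF ex])
  then show "p1 v \<in> T1" by simp
  from h obtain b where "b \<in> T2" "v = p1 v + b" by blast
  then show "p2 v \<in> T2" unfolding p2_def by (metis add_diff_cancel_left')
  show "v = p1 v + p2 v" unfolding p2_def by simp
qed

lemma p_eq: assumes "a \<in> T1" "b \<in> T2" shows "p1 (a + b) = a" "p2 (a + b) = b"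
proof -
  have "p1 (a+b) + p2 (a+b) = a + b" using p(3)[of "a+b"] by simp
  then show "p1 (a + b) = a" "p2 (a + b) = b" using uniq[OF p(1) p(2) assms] by blast+
qed

lemma p_lin: "p1 (smul c x + smul d y) = smul c (p1 x) + smul d (p1 y)"
     "p2 (smul c x + smul d y) = smul c (p2 x) + smul d (p2 y)"
proof -
  have e: "smul c x + smul d y = (smul c (p1 x) + smul d (p1 y)) + (smul c (p2 x) + smul d (p2 y))"
    by (subst (1 2) p(3)) (simp add: smul_add algebra_simps)
  have i1: "smul c (p1 x) + smul d (p1 y) \<in> T1" using ksp.add[OF k1] ksp.smul[OF k1] p(1) by blast
  have i2: "smul c (p2 x) + smul d (p2 y) \<in> T2" using ksp.add[OF k2] ksp.smul[OF k2] p(2) by blast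
  show "p1 (smul c x + smul d y) = smul c (p1 x) + smul d (p1 y)" unfolding e using p_eq[OF i1 i2] by simp
  show "p2 (smul c x + smul d y) = smul c (p2 x) + smul d (p2 y)" unfolding e using p_eq[OF i1 i2] by simp
qed

lemma p_diff: "p1 (x - y) = p1 x - p1 y" "p2 (x - y) = p2 x - p2 y"
  using p_lin[of 1 x "-1" y] by (simp_all add: smul_neg)

lemma KS: assumes s: "s \<in> S" and u: "u \<in> s" shows "p1 u \<in> s" "p2 u \<in> s"
proof -
  obtain a where a: "a \<noteq> 0" "s \<inter> T1 = pt a" using cover_T(2)[OF T1 s] by blast
  obtain b where b: "b \<noteq> 0" "s \<inter> T2 = pt b" using cover_T(2)[OF T2 s] by blast
  have "b \<notin> pt a"
  proof
    assume "b \<in> pt a"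
    then have "b \<in> T1" "b \<in> T2" using a(2) b(2) pt_self by blast+
    then show False using W0 b(1) by blast
  qed
  moreover have "a \<in> s" "b \<in> s" using a(2) b(2) pt_self by blast+
  ultimately have sd: "s = (\<lambda>(c,d). smul c a + smul d b) ` (UNIV \<times> UNIV)"
    using span2[OF S_line(1)[OF s] S_line(2)[OF s] _ _ a(1)] by blast
  then have "u \<in> (\<lambda>(c,d). smul c a + smul d b) ` (UNIV \<times> UNIV)" using u by simp
  then obtain c d where cd: "u = smul c a + smul d b" by auto
  have "smul c a \<in> s \<inter> T1" "smul d b \<in> s \<inter> T2" using a(2) b(2) pt_smul by blast+
  then show "p1 u \<in> s" "p2 u \<in> s" using p_eq[of "smul c a" "smul d b"] cd by auto
qed

lemma p1_inj: "u \<in> U \<Longrightarrow> u' \<in> U \<Longrightarrow> p1 u = p1 u' \<Longrightarrow> u = u'"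
proof -
  assume h: "u \<in> U" "u' \<in> U" "p1 u = p1 u'"
  have "u - u' = p2 u - p2 u'" using h(3) p(3)[of u] p(3)[of u'] by (metis add_diff_cancel_left)
  then have "u - u' \<in> T2" using ksp.diff[OF k2] p(2) by metis
  moreover have "u - u' \<in> U" using ksp.diff[OF kU] h by blast
  ultimately have "u - u' = 0" using T_props(3)[OF T2] by blast
  then show "u = u'" by simp
qed

lemma p1_surj: "a \<in> T1 \<Longrightarrow> \<exists>u\<in>U. p1 u = a"
proof -
  assume a: "a \<in> T1"
  have "card (p1 ` U) = card U" by (rule card_image) (auto intro: inj_onI p1_inj)
  then have "card (p1 ` U) = card T1" using cU T_props(2)[OF T1] by simp
  moreover have "p1 ` U \<subseteq> T1" using p(1) by blast
  ultimately have "p1 ` U = T1" using card_subset_eq[of T1 "p1 ` U"] by simp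
  then have "a \<in> p1 ` U" using a by simp
  then show ?thesis by (metis imageE)
qed

lemma p1_nz: "u \<in> U \<Longrightarrow> u \<noteq> 0 \<Longrightarrow> p1 u \<noteq> 0"
proof
  assume h: "u \<in> U" "u \<noteq> 0" "p1 u = 0"
  then have "u = p2 u" using p(3)[of u] by simp
  then have "u \<in> T2" using p(2) by metis
  then show False using T_props(3)[OF T2] h by blast
qed

lemma p2_nz: "u \<in> U \<Longrightarrow> u \<noteq> 0 \<Longrightarrow> p2 u \<noteq> 0"
proof
  assume h: "u \<in> U" "u \<noteq> 0" "p2 u = 0"
  then have "u = p1 u" using p(3)[of u] by simp
  then have "u \<in> T1" using p(1) by metis
  then show False using T_props(3)[OF T1] h by blast
qed

lemma SL: assumes z: "z \<in> U" and s: "s \<in> S" and pz: "p1 z \<in> s" shows "z \<in> s"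
proof (cases "z = 0")
  case True then show ?thesis using S0[OF s] by simp
next
  case False
  then obtain s' where s': "s' \<in> S" "z \<in> s'" using cover_U z by blast
  have "p1 z \<in> s'" using KS[OF s'] by blast
  moreover have "p1 z \<noteq> 0" using p1_nz z False by blast
  ultimately have "s' = s" using S_disj[OF s'(1) s] pz by blast
  then show ?thesis using s' by simp
qed

lemma Cl: assumes s1: "s1 \<in> S" and s2: "s2 \<in> S" and ne12: "s1 \<noteq> s2"
  and u1: "u1 \<in> U" "u1 \<in> s1" "u1 \<noteq> 0" and u2: "u2 \<in> U" "u2 \<in> s2"
  and uU: "smul a u1 + smul b u2 \<in> U"
  shows "a \<in> K"
proof -
  let ?u = "smul a u1 + smul b u2"
  interpret ks1: ksp UNIV s1 using kS[OF s1] .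
  interpret ks2: ksp UNIV s2 using kS[OF s2] .
  have x1: "p1 u1 \<in> s1" "p2 u1 \<in> s1" using KS[OF s1 u1(2)] by blast+
  have x2: "p1 u2 \<in> s2" "p2 u2 \<in> s2" using KS[OF s2 u2(2)] by blast+
  have "smul a (p1 u1) \<in> T1" using ksp.smul[OF k1] p(1) by blast
  then obtain u' where u': "u' \<in> U" "p1 u' = smul a (p1 u1)" using p1_surj by blast
  have u's1: "u' \<in> s1" using SL[OF u'(1) s1] u'(2) ks1.smul x1(1) by simp
  define u'' where "u'' = ?u - u'"
  have u''U: "u'' \<in> U" unfolding u''_def using ksp.diff[OF kU] uU u'(1) by blast
  have "p1 u'' = smul b (p1 u2)" unfolding u''_def p_diff p_lin u'(2) by simp
  then have "p1 u'' \<in> s2" using ks2.smul x2(1) by simp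
  then have "u'' \<in> s2" using SL[OF u''U s2] by simp
  then have pu''s2: "p2 u'' \<in> s2" using KS[OF s2] by blast
  have pu's1: "p2 u' \<in> s1" using KS[OF s1 u's1] by blast
  define z where "z = smul a (p2 u1) - p2 u'"
  have zs1: "z \<in> s1" unfolding z_def using ks1.diff ks1.smul x1(2) pu's1 by simp
  have "z = p2 u'' - smul b (p2 u2)" unfolding z_def u''_def p_diff p_lin by (simp add: algebra_simps)
  then have zs2: "z \<in> s2" using ks2.diff ks2.smul x2(2) pu''s2 by simp
  have "z = 0" using S_disj[OF s1 s2 ne12 zs1 zs2] .
  then have "p2 u' = smul a (p2 u1)" unfolding z_def by simp
  then have "u' = smul a u1" using p(3)[of u'] p(3)[of u1] u'(2) by (metis smul_add)
  then have "smul a u1 \<in> U" using u'(1) by simp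
  then show "a \<in> K" using scat_K[OF sf sU scU u1(1) u1(3)] by blast
qed

lemma main: assumes l: "Ksubspace UNIV l" and cl: "card l = CARD('a)^2" and clU: "card (l \<inter> U) = CARD('a)"
  shows "l \<in> S"
proof -
  interpret kl: ksp UNIV l using subfield_UNIV l by unfold_locales
  have "\<not> l \<inter> U \<subseteq> {0}"
  proof
    assume "l \<inter> U \<subseteq> {0}"
    then have "card (l \<inter> U) \<le> 1" using card_mono[of "{0}" "l \<inter> U"] by simp
    then show False using clU Q2 by simp
  qed
  then obtain u1 where u1: "u1 \<in> l" "u1 \<in> U" "u1 \<noteq> 0" by blast
  then obtain s1 where s1: "s1 \<in> S" "u1 \<in> s1" using cover_U by blast
  interpret ks1: ksp UNIV s1 using kS[OF s1(1)] .
  have pts1: "pt u1 \<subseteq> s1" using pt_in[OF S_line(1)[OF s1(1)] s1(2)] .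
  have ptl: "pt u1 \<subseteq> l" using pt_in[OF l u1(1)] .
  show ?thesis
  proof (cases "l \<inter> U \<subseteq> s1")
    case True
    show ?thesis
    proof (cases "l \<subseteq> s1")
      case True
      then have "l = s1" using card_subset_eq[of s1 l] cl S_line(2)[OF s1(1)] by simp
      then show ?thesis using s1 by simp
    next
      case False
      then have "l \<inter> s1 \<subset> l" by blast
      then have "card (l \<inter> s1) * card (UNIV::'a set) \<le> card l"
        using card_step[OF subfield_UNIV Ksub_Int[OF l S_line(1)[OF s1(1)]] l] by blast
      then have "card (l \<inter> s1) * CARD('a) \<le> CARD('a) * CARD('a)" using cl by (simp add: power2_eq_square)
      then have le: "card (l \<inter> s1) \<le> CARD('a)" using Q2 by simp
      have "pt u1 \<subseteq> l \<inter> s1" using pts1 ptl by blast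
      moreover have "card (pt u1) = CARD('a)" using card_pt u1(3) by blast
      ultimately have "pt u1 = l \<inter> s1" using le card_subset_eq[of "l \<inter> s1" "pt u1"] card_mono[of "l \<inter> s1" "pt u1"]
        by simp
      then have "l \<inter> U \<subseteq> pt u1 \<inter> U" using \<open>l \<inter> U \<subseteq> s1\<close> by blast
      then have "card (l \<inter> U) \<le> card (pt u1 \<inter> U)" by (simp add: card_mono)
      moreover have "pt u1 \<in> linset U" using u1 unfolding linset_def by (auto simp: vzero_eq)
      ultimately have "CARD('a) \<le> card K" using scat_pt_card[OF sf sU scU] clU by simp
      then show ?thesis using qQ by simp
    qed
  next
    case False
    then obtain u2 where u2: "u2 \<in> l" "u2 \<in> U" "u2 \<notin> s1" by blast
    then have u20: "u2 \<noteq> 0" using S0[OF s1(1)] by blast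
    then obtain s2 where s2: "s2 \<in> S" "u2 \<in> s2" using cover_U u2 by blast
    have ne: "s1 \<noteq> s2" using s2 u2 by blast
    have "u2 \<notin> pt u1" using pts1 u2(3) by blast
    then have ld: "l = (\<lambda>(c,d). smul c u1 + smul d u2) ` (UNIV \<times> UNIV)"
      using span2[OF l cl u1(1) u2(1) u1(3)] by blast
    have "l \<inter> U \<subseteq> (\<lambda>(c,d). smul c u1 + smul d u2) ` (K \<times> K)"
    proof
      fix u assume u: "u \<in> l \<inter> U"
      then have "u \<in> (\<lambda>(c,d). smul c u1 + smul d u2) ` (UNIV \<times> UNIV)" using ld by simp
      then obtain a b where ab: "u = smul a u1 + smul b u2" by auto
      have uU: "smul a u1 + smul b u2 \<in> U" using u ab by simp
      then have "a \<in> K" using Cl[OF s1(1) s2(1) ne u1(2) s1(2) u1(3) u2(2) s2(2)] by blast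
      moreover have "smul b u2 + smul a u1 \<in> U" using uU by (simp add: add.commute)
      then have "b \<in> K"
        using Cl[OF s2(1) s1(1) ne[symmetric] u2(2) s2(2) u20 u1(2) s1(2)] by blast
      ultimately show "u \<in> (\<lambda>(c,d). smul c u1 + smul d u2) ` (K \<times> K)" using ab by auto
    qed
    then have "card (l \<inter> U) \<le> card ((\<lambda>(c,d). smul c u1 + smul d u2) ` (K \<times> K))" by (simp add: card_mono)
    also have "\<dots> \<le> card (K \<times> K)" by (rule card_image_le) simp
    finally have "CARD('a) \<le> card K * card K" using clU by (simp add: card_cartesian_product)
    then show ?thesis using qqQ by simp
  qed
qed

end

context PR begin
lemma part1: "S = {s. is_line s \<and> weight K U s = t}"
proof
  show "S \<subseteq> {s. is_line s \<and> weight K U s = t}" using pr by (auto simp: pseudoregulus_type_def)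
  show "{s. is_line s \<and> weight K U s = t} \<subseteq> S"
  proof
    fix l assume "l \<in> {s. is_line s \<and> weight K U s = t}"
    then have l: "is_line l" "weight K U l = t" by auto
    have ks: "Ksubspace UNIV l" using l by (simp add: is_line_def proj_subspace_def)
    have cl: "card l = CARD('a)^2" using l card_pow[OF subfield_UNIV ks]
      by (simp add: is_line_def proj_subspace_def power2_eq_square)
    have clU: "card (l \<inter> U) = CARD('a)" using l card_pow[OF sf Ksub_Int[OF Ksub_UNIV[OF ks] sU]] cF
      by (simp add: weight_def)
    obtain T1 T2 where "T1 \<in> transversals n U S" "T2 \<in> transversals n U S" "T1 \<noteq> T2"
      using trans2 by blast
    then interpret PR2 K U S n t T1 T2 by unfold_locales
    show "l \<in> S" using main[OF ks cl clU] .
  qed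
qed
end


lemma Kdim_cong: "card A = card B \<Longrightarrow> Kdim K A = Kdim K B"
  unfolding Kdim_def by simp

theorem corollary3p3:
  fixes K :: "'a::{field,finite} set"
    and U :: "('m::finite \<Rightarrow> 'a) set"
    and S :: "('m \<Rightarrow> 'a) set set"
    and n t :: nat
  assumes "n \<ge> 2" and "t \<ge> 3"
    and "subfield K" and "card (UNIV :: 'a set) = card K ^ t"
    and "card (UNIV :: 'm set) = 2 * n"
    and "pseudoregulus_type K n t U S"
  shows "S = {s. is_line s \<and> weight K U s = t}
    \<and> (\<forall>U' S'. pseudoregulus_type K n t U' S' \<and> linset U' = linset U
          \<longrightarrow> S' = S \<and> transversals n U' S' = transversals n U S)"
proof -
  interpret P: PR K U S n t using assms by unfold_locales
  have S: "S = {s. is_line s \<and> weight K U s = t}" by (rule P.part1)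
  show ?thesis
  proof (intro conjI allI impI)
    show "S = {s. is_line s \<and> weight K U s = t}" by (rule S)
    fix U' S' assume h: "pseudoregulus_type K n t U' S' \<and> linset U' = linset U"
    interpret P': PR K U' S' n t using assms h by unfold_locales auto
    have S': "S' = {s. is_line s \<and> weight K U' s = t}" by (rule P'.part1)
    have w: "weight K U' l = weight K U l" if "is_line l" for l
    proof -
      have ks: "Ksubspace UNIV l" using that by (simp add: is_line_def proj_subspace_def)
      have "card (l \<inter> U') = card (l \<inter> U)"
        using scat_count[OF assms(3) P'.sU P'.scU ks] scat_count[OF assms(3) P.sU P.scU ks] h by simp
      then show ?thesis unfolding weight_def by (rule Kdim_cong)
    qed
    have "S' = S" unfolding S S' using w by (auto intro!: Collect_cong)
    then show "S' = S" .
    show "transversals n U' S' = transversals n U S"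
      unfolding transversals_def using h \<open>S' = S\<close> by simp
  qed
qed

end
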